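(* Let $n\ge4$, let $C=\mathrm{circ}(1,0,\ldots,0,1)$ of order $n-1$, let $X=2(CC^T+I_{n-1})^{-1}\left[ (n-1)I_{n-1}-J_{n-1}\right]$ and $Y=J_{n-1}+C^TX$. Then $Y=\mathrm{circ}(d_0,d_1,\ldots,d_{n-2})$ where \[d_0=\frac{1}{5}+\frac{4(n-1)}{\sqrt{5}}\left[\frac{2^{n-2}+(-3+\sqrt{5})^{n-2}}{2^{n-1}-(-3+\sqrt{5})^{n-1}} -\frac{2^{n-2}+(-3-\sqrt{5})^{n-2}}{2^{n-1}-(-3-\sqrt{5})^{n-1}}\right]\] and for $j=1,2,\ldots,n-2$, \[d_j=\frac{1}{5}+\frac{2^{n+1-j}(n-1)}{5+\sqrt{5}}\left[\frac{2(-3+\sqrt{5})^{j-1}}{2^{n-1}-(-3+\sqrt{5})^{n-1}} -\frac{(-3-\sqrt{5})^{j}}{2^{n-1}-(-3-\sqrt{5})^{n-1}}\right].\]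
   Context: For $c_0,\dots,c_{k-1}$, $\mathrm{circ}(c_0,\ldots,c_{k-1})$ denotes the $k\times k$ circulant matrix whose $(i,j)$-entry is $c_{(j-i)\bmod k}$. $J_{n-1}$ is the $(n-1)\times(n-1)$ all-ones matrix and $I_{n-1}$ the identity. Note $CC^T+I_{n-1}=\mathrm{circ}(3,1,0,\ldots,0,1)$ is invertible. ($X,Y$ are blocks of the Moore–Penrose inverse of the incidence matrix of the wheel graph $W_n$.) *)

theory Defs
  imports Complex_Main "Jordan_Normal_Form.Gauss_Jordan_Elimination"
begin

definition circ :: "nat \<Rightarrow> (nat \<Rightarrow> 'a) \<Rightarrow> 'a mat" where
  "circ k c = mat k k (\<lambda>(i, j). c ((j + k - i) mod k))"

definition ones_mat :: "nat \<Rightarrow> 'a :: one mat" where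
  "ones_mat k = mat k k (\<lambda>_. 1)"

end

theory Submission
  imports Defs "Jordan_Normal_Form.Determinant"
begin


definition rr :: real where "rr = (sqrt 5 - 3)/2"
definition hh :: "nat \<Rightarrow> nat \<Rightarrow> real" where "hh m t = rr^t + rr^(m-t)"
definition al :: "nat \<Rightarrow> real" where "al m = 2*real m/(sqrt 5*(1-rr^m))"
definition xx :: "nat \<Rightarrow> nat \<Rightarrow> real" where "xx m t = -2/5 + al m * hh m t"
definition zz :: "nat \<Rightarrow> nat \<Rightarrow> real" where "zz m t = al m * hh m t / (2*real m)"

lemma ss: "sqrt 5 * sqrt 5 = (5::real)" by simp

lemma rr_quad: "rr*rr + 3*rr + 1 = 0"
  unfolding rr_def using ss by (simp add: field_simps)

lemma rr_bounds: "-1 < rr" "rr < 0"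
proof -
  have "2 < sqrt (5::real)" by (simp add: real_less_rsqrt)
  moreover have "sqrt (5::real) < 3" by (simp add: real_less_lsqrt)
  ultimately show "-1 < rr" "rr < 0" unfolding rr_def by auto
qed

lemma rr_pow_ne1: "m > 0 \<Longrightarrow> rr^m \<noteq> 1"
proof
  assume "m > 0" "rr^m = 1"
  then have "\<bar>rr\<bar>^m = 1" by (metis power_abs abs_one)
  moreover have "\<bar>rr\<bar> < 1" using rr_bounds by auto
  moreover have "\<bar>rr\<bar> > 0" using rr_bounds by auto
  ultimately have "\<bar>rr\<bar>^Suc (m-1) < 1" using power_Suc_less_one[of "\<bar>rr\<bar>" "m-1"] by blast
  then show False using \<open>m>0\<close> \<open>\<bar>rr\<bar>^m = 1\<close> by simp
qed

lemma pow_rec: "rr^k + 3*rr^(k+1) + rr^(k+2) = 0"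
proof -
  have "rr^k + 3*rr^(k+1) + rr^(k+2) = rr^k * (rr*rr + 3*rr + 1)"
    by (simp add: algebra_simps power2_eq_square)
  then show ?thesis using rr_quad by simp
qed

lemma hh_rec: assumes "0 < t" "t < m"
  shows "hh m (t-1) + 3*hh m t + hh m (t+1) = 0"
proof -
  obtain k where t: "t = Suc k" using assms by (cases t) auto
  define p where "p = m - t - 1"
  have m: "m = t + 1 + p" using assms unfolding p_def by simp
  have "hh m (t-1) + 3*hh m t + hh m (t+1) =
     (rr^k + 3*rr^(k+1) + rr^(k+2)) + (rr^p + 3*rr^(p+1) + rr^(p+2))"
    unfolding hh_def t m by (simp add: algebra_simps numeral_2_eq_2)
  then show ?thesis using pow_rec by simp
qed

lemma hh_m: "hh m m = hh m 0" unfolding hh_def by simp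

lemma hh_rec0: assumes "2 \<le> m"
  shows "hh m 1 + 3*hh m 0 + hh m (m-1) = sqrt 5 * (1 - rr^m)"
proof -
  obtain p where m: "m = Suc p" using assms by (cases m) auto
  have "hh m 1 + 3*hh m 0 + hh m (m-1) = 2*rr + 3 + rr^p * (2 + 3*rr)"
    unfolding hh_def m using assms m by (simp add: algebra_simps)
  also have "\<dots> = sqrt 5 * (1 - rr^m)"
  proof -
    have a: "2 + 3*rr = - sqrt 5 * rr" "2*rr+3 = sqrt 5" unfolding rr_def using ss by (simp_all add: field_simps)
    show ?thesis unfolding m a by (simp add: algebra_simps)
  qed
  finally show ?thesis .
qed



definition qq :: real where "qq = -3 - rr"
lemma rq: "rr*qq = 1" unfolding qq_def using rr_quad by (simp add: algebra_simps)
lemma e1: "-3 + sqrt 5 = 2*rr" unfolding rr_def by (simp add: field_simps)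
lemma e2: "-3 - sqrt 5 = 2*qq" unfolding qq_def rr_def by (simp add: field_simps)
lemma rr_ne0: "rr \<noteq> 0" using rr_bounds by simp

lemma alg0:
  fixes r P T s mm :: real
  assumes "r \<noteq> 0" "P \<noteq> 0" "r*P \<noteq> 1" "s \<noteq> 0" "T > 0"
  shows "4*mm/s*((T + T*P)/(2*T - 2*T*(r*P)) - (T + T*(1/P))/(2*T - 2*T*((1/r)*(1/P))))
     = 2*mm/(s*(1 - r*P))*(1 + r*P + P + r)"
proof -
  have a: "1 - r*P \<noteq> 0" "r*P - 1 \<noteq> 0" using assms by auto
  have 1: "(T + T*P)/(2*T - 2*T*(r*P)) = (1+P)/(2*(1-r*P))"
    using assms a by (simp add: field_simps)
  have 2: "(T + T*(1/P))/(2*T - 2*T*((1/r)*(1/P))) = -(r*P+r)/(2*(1-r*P))"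
  proof -
    have "(T + T*(1/P))/(2*T - 2*T*((1/r)*(1/P))) = (T*(P+1)/P)/(2*T*(r*P-1)/(r*P))"
      using assms a by (simp add: field_simps)
    also have "\<dots> = r*(P+1)/(2*(r*P-1))" using assms a by (simp add: field_simps)
    also have "\<dots> = -(r*P+r)/(2*(1-r*P))" using a by (simp add: field_simps)
    finally show ?thesis .
  qed
  have 3: "4*mm/s*((1+P)/(2*D) - -(R+r)/(2*D)) = 2*mm/(s*D)*(1 + R + P + r)" if "D \<noteq> 0" for D R
    using that assms by (simp add: field_simps)
  show ?thesis unfolding 1 2 using 3[OF a(1), of "r*P"] .
qed


lemma l1: fixes r K E T U :: real assumes "r \<noteq> 0" "K \<noteq> 0" "E \<noteq> 0" "1 - r*K*E \<noteq> 0" "T > 0" "U > 0"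
  shows "2*(T*K)/(2*T*U - 2*T*U*(r*K*E)) = K/(U*(1-r*K*E))"
proof -
  have "2*T*U - 2*T*U*(r*K*E) = (2*T)*(U*(1-r*K*E))" by (simp add: algebra_simps)
  then show ?thesis using assms by simp
qed
lemma l2: fixes r K E T U :: real assumes "r \<noteq> 0" "K \<noteq> 0" "E \<noteq> 0" "1 - r*K*E \<noteq> 0" "T > 0" "U > 0"
  shows "(2*T*(1/(r*K)))/(2*T*U - 2*T*U*(1/(r*K*E))) = -E/(U*(1-r*K*E))"
proof -
  have "2*T*U - 2*T*U*(1/(r*K*E)) = (2*T/(r*K)) * (-(U*(1-r*K*E))/E)"
    using assms by (simp add: field_simps)
  then show ?thesis using assms by simp
qed
lemma l3: fixes r K E U s mm D :: real assumes "D \<noteq> 0" "s > 0" "U > 0" and key: "2*(1+r)*(5+s) = 4*s"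
  shows "4*U*mm/(5+s)*(K/(U*D) - -E/(U*D)) = 2*mm/(s*D)*(r*K + E + K + r*E)"
proof -
  have s5: "5 + s \<noteq> 0" using assms by simp
  have g: "4*U*mm/w*(K/(U*D) - -E/(U*D)) = 4*mm*(K+E)/(w*D)" if "w \<noteq> 0" for w
    using assms that by (simp add: field_simps)
  have "4*U*mm/(5+s)*(K/(U*D) - -E/(U*D)) = 4*mm*(K+E)/((5+s)*D)"
    using g[OF s5] .
  also have "4/(5+s) = 2*(1+r)/s" using key assms s5 by (simp add: field_simps)
  hence "4*mm*(K+E)/((5+s)*D) = 2*(1+r)*mm*(K+E)/(s*D)"
    by (metis (no_types, lifting) times_divide_eq_left times_divide_eq_right divide_divide_eq_left mult.commute mult.left_commute)
  also have "\<dots> = 2*mm/(s*D)*(r*K + E + K + r*E)" using assms by (simp add: field_simps)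
  finally show ?thesis .
qed
lemma alg1:
  fixes r K E T U s mm :: real
  assumes "r \<noteq> 0" "K \<noteq> 0" "E \<noteq> 0" "r*K*E \<noteq> 1" "s > 0" "T > 0" "U > 0"
    and key: "2*(1+r)*(5+s) = 4*s"
  shows "4*U*mm/(5+s) * (2*(T*K)/(2*T*U - 2*T*U*(r*K*E)) - (2*T*(1/(r*K)))/(2*T*U - 2*T*U*(1/(r*K*E))))
     = 2*mm/(s*(1 - r*K*E))*(r*K + E + K + r*E)"
proof -
  have a: "1 - r*K*E \<noteq> 0" using assms by auto
  show ?thesis unfolding l1[OF assms(1-3) a assms(6,7)] l2[OF assms(1-3) a assms(6,7)]
    using l3[OF a assms(5) assms(7) key] .
qed


lemma qq_inv: "qq = 1/rr" using rq rr_ne0 by (simp add: field_simps)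

lemma d0_eq: assumes "m \<ge> 3"
  shows "1/5 + 4*real m/sqrt 5 * ((2^(m-1) + (-3+sqrt 5)^(m-1))/(2^m - (-3+sqrt 5)^m)
     - (2^(m-1) + (-3-sqrt 5)^(m-1))/(2^m - (-3-sqrt 5)^m)) = 1 + (xx m 0 + xx m (m-1))"
proof -
  obtain p where m: "m = Suc p" using assms by (cases m) auto
  define T :: real where "T = 2^p"
  define P where "P = rr^p"
  have T: "T > 0" unfolding T_def by simp
  have P: "P \<noteq> 0" unfolding P_def using rr_ne0 by simp
  have rP: "rr*P \<noteq> 1" using rr_pow_ne1[of m] unfolding P_def m by simp
  have q1: "(2::real)^(m-1) + (2*rr)^(m-1) = T + T*P" unfolding m T_def P_def by (simp add: power_mult_distrib)
  have q2: "(2::real)^m - (2*rr)^m = 2*T - 2*T*(rr*P)" unfolding m T_def P_def by (simp add: power_mult_distrib)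
  have q3: "(2::real)^(m-1) + (2*qq)^(m-1) = T + T*(1/P)" unfolding m T_def P_def qq_inv by (simp add: power_mult_distrib power_one_over power_divide)
  have q4: "(2::real)^m - (2*qq)^m = 2*T - 2*T*((1/rr)*(1/P))" unfolding m T_def P_def qq_inv by (simp add: power_mult_distrib power_one_over power_divide)
  have R: "1 + (xx m 0 + xx m (m-1)) = 1/5 + 2*real m/(sqrt 5*(1 - rr*P))*(1 + rr*P + P + rr)"
  proof -
    have "1 + (xx m 0 + xx m (m-1)) = 1/5 + al m * (1 + rr*P + P + rr)"
      unfolding xx_def hh_def m P_def by (simp add: algebra_simps)
    moreover have "al m = 2*real m/(sqrt 5*(1 - rr*P))" unfolding al_def m P_def by simp
    ultimately show ?thesis by simp
  qed
  show ?thesis unfolding e1 e2 q1 q2 q3 q4 R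
    using alg0[OF rr_ne0 P rP _ T, of "sqrt 5" "real m"] by simp
qed

lemma dj_eq: assumes "1 \<le> j" "j < m"
  shows "1/5 + 2^(m+2-j)*real m/(5+sqrt 5) * (2*(-3+sqrt 5)^(j-1)/(2^m - (-3+sqrt 5)^m)
     - (-3-sqrt 5)^j/(2^m - (-3-sqrt 5)^m)) = 1 + (xx m j + xx m (j-1))"
proof -
  obtain k where j: "j = Suc k" using assms by (cases j) auto
  define e where "e = m - j"
  have m: "m = j + e" using assms unfolding e_def by simp
  define T :: real where "T = 2^k"
  define U :: real where "U = 2^e"
  define K where "K = rr^k"
  define E where "E = rr^e"
  have T: "T > 0" unfolding T_def by simp
  have U: "U > 0" unfolding U_def by simp
  have K: "K \<noteq> 0" unfolding K_def using rr_ne0 by simp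
  have E: "E \<noteq> 0" unfolding E_def using rr_ne0 by simp
  have rKE: "rr*K*E \<noteq> 1" using rr_pow_ne1[of m] assms unfolding K_def E_def m j by (simp add: power_add)
  have key: "2*(1+rr)*(5+sqrt 5) = 4*sqrt 5" unfolding rr_def using ss by (simp add: field_simps)
  have q0: "(2::real)^(m+2-j) = 4*U" unfolding m U_def by simp
  have q1: "2*(2*rr)^(j-1) = 2*(T*K)" unfolding j T_def K_def by (simp add: power_mult_distrib)
  have q2: "(2::real)^m - (2*rr)^m = 2*T*U - 2*T*U*(rr*K*E)" unfolding m j T_def K_def U_def E_def
    by (simp add: power_mult_distrib power_add algebra_simps)
  have q3: "(2*qq)^j = 2*T*(1/(rr*K))" unfolding j T_def K_def qq_inv by (simp add: power_mult_distrib power_one_over power_divide)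
  have q4: "(2::real)^m - (2*qq)^m = 2*T*U - 2*T*U*(1/(rr*K*E))" unfolding m j T_def K_def U_def E_def qq_inv
    by (simp add: power_mult_distrib power_add power_one_over power_divide algebra_simps)
  have R: "1 + (xx m j + xx m (j-1)) = 1/5 + 2*real m/(sqrt 5*(1 - rr*K*E))*(rr*K + E + K + rr*E)"
  proof -
    have "1 + (xx m j + xx m (j-1)) = 1/5 + al m * (rr*K + E + K + rr*E)"
      unfolding xx_def hh_def m j K_def E_def by (simp add: algebra_simps)
    moreover have "al m = 2*real m/(sqrt 5*(1 - rr*K*E))" unfolding al_def m j K_def E_def
      by (simp add: power_add algebra_simps)
    ultimately show ?thesis by simp
  qed
  have s5: "sqrt 5 > (0::real)" by simp
  show ?thesis unfolding e1 e2 q0 q1 q2 q3 q4 R alg1[OF rr_ne0 K E rKE s5 T U key, of "real m"] ..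
qed


definition prv :: "nat \<Rightarrow> nat \<Rightarrow> nat" where "prv m t = (if t = 0 then m-1 else t-1)"
definition nxt :: "nat \<Rightarrow> nat \<Rightarrow> nat" where "nxt m t = (if t = m-1 then 0 else t+1)"

lemma hh_sum: assumes "3 \<le> m" "t < m"
  shows "3*hh m t + hh m (prv m t) + hh m (nxt m t) = (if t = 0 then sqrt 5 * (1 - rr^m) else 0)"
proof (cases "t = 0")
  case True
  then show ?thesis using hh_rec0[of m] assms unfolding prv_def nxt_def by simp
next
  case False
  show ?thesis
  proof (cases "t = m-1")
    case True
    then have "nxt m t = 0" "prv m t = t - 1" using False unfolding nxt_def prv_def by auto
    moreover have "hh m 0 = hh m (t+1)" using True assms hh_m by simp
    ultimately show ?thesis using hh_rec[of t m] False assms by simp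
  next
    case F2: False
    then have "nxt m t = t+1" "prv m t = t - 1" using False unfolding nxt_def prv_def by auto
    then show ?thesis using hh_rec[of t m] False assms by simp
  qed
qed

lemma xx_rec: assumes "3 \<le> m" "t < m"
  shows "3*xx m t + xx m (prv m t) + xx m (nxt m t) = 2*(real m*(if t=0 then 1 else 0) - 1)"
proof -
  have "3*xx m t + xx m (prv m t) + xx m (nxt m t) = -2 + al m * (3*hh m t + hh m (prv m t) + hh m (nxt m t))"
    unfolding xx_def by (simp add: algebra_simps)
  also have "\<dots> = 2*(real m*(if t=0 then 1 else 0) - 1)"
    unfolding hh_sum[OF assms] using rr_pow_ne1[of m] assms by (simp add: al_def)
  finally show ?thesis .
qed

lemma zz_rec: assumes "3 \<le> m" "t < m"
  shows "3*zz m t + zz m (prv m t) + zz m (nxt m t) = (if t=0 then 1 else 0)"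
proof -
  have "3*zz m t + zz m (prv m t) + zz m (nxt m t) = al m * (3*hh m t + hh m (prv m t) + hh m (nxt m t)) / (2*real m)"
    unfolding zz_def by (simp add: algebra_simps add_divide_distrib)
  also have "\<dots> = (if t=0 then 1 else 0)"
    unfolding hh_sum[OF assms] using rr_pow_ne1[of m] assms by (simp add: al_def)
  finally show ?thesis .
qed



lemma circ_carrier[simp]: "circ k c \<in> carrier_mat k k" unfolding circ_def by simp
lemma circ_dims[simp]: "dim_row (circ k c) = k" "dim_col (circ k c) = k" unfolding circ_def by simp_all

definition tt :: "nat \<Rightarrow> nat \<Rightarrow> nat \<Rightarrow> nat" where "tt k i j = (if i \<le> j then j - i else j + k - i)"

lemma tt_lt: "i < k \<Longrightarrow> j < k \<Longrightarrow> tt k i j < k" unfolding tt_def by auto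

lemma mod_tt: assumes "i < k" "j < k" shows "(j + k - i) mod k = tt k i j"
proof (cases "i \<le> j")
  case True
  then have "j + k - i = (j - i) + k" by simp
  then have "(j + k - i) mod k = (j - i) mod k" by simp
  then show ?thesis using True assms unfolding tt_def by simp
next
  case False
  then show ?thesis using assms unfolding tt_def by simp
qed

lemma index_circ[simp]: "i < k \<Longrightarrow> j < k \<Longrightarrow> circ k c $$ (i,j) = c (tt k i j)"
  unfolding circ_def by (simp add: mod_tt)

lemma circ_eqI: "(\<And>t. t < k \<Longrightarrow> f t = g t) \<Longrightarrow> circ k f = circ k g"
  by (rule eq_matI) (auto simp: tt_lt)

lemma circ_add: "circ k f + circ k g = circ k (\<lambda>t. f t + g t)"
  by (rule eq_matI) (auto simp: tt_lt)

lemma circ_minus: "circ k f - circ k g = circ k (\<lambda>t. f t - g t)"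
  by (rule eq_matI) (auto simp: tt_lt)

lemma circ_smult: "a \<cdot>\<^sub>m circ k f = circ k (\<lambda>t. a * f t)"
  by (rule eq_matI) (auto simp: tt_lt)

lemma one_circ: "1\<^sub>m k = circ k (\<lambda>t. if t = 0 then 1 else 0)"
  by (rule eq_matI) (auto simp: tt_lt tt_def)

lemma ones_circ: "ones_mat k = circ k (\<lambda>t. 1)"
  unfolding ones_mat_def by (rule eq_matI) (auto simp: tt_lt)

lemma sum_two: fixes g :: "nat \<Rightarrow> 'a::comm_ring_1"
  assumes "a < k" "b < k" "a \<noteq> b"
  shows "(\<Sum>l\<in>{0..<k}. (if l = a \<or> l = b then 1 else 0) * g l) = g a + g b"
proof -
  have "(\<Sum>l\<in>{0..<k}. (if l = a \<or> l = b then 1 else 0) * g l)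
      = (\<Sum>l\<in>{0..<k}. (if l = a then g l else 0) + (if l = b then g l else 0))"
    by (rule sum.cong) (use assms in auto)
  also have "\<dots> = g a + g b" using assms by (simp add: sum.distrib)
  finally show ?thesis .
qed

lemma mult_entry: assumes "A \<in> carrier_mat k k" "B \<in> carrier_mat k k" "i < k" "j < k"
  shows "(A * B) $$ (i,j) = (\<Sum>l\<in>{0..<k}. A $$ (i,l) * B $$ (l,j))"
  using assms by (simp add: scalar_prod_def)

definition cc :: "nat \<Rightarrow> nat \<Rightarrow> real" where "cc k i = (if i = 0 \<or> i = k - 1 then 1 else 0)"

lemma CT_mult: assumes "3 \<le> k"
  shows "(circ k (cc k))\<^sup>T * circ k f = circ k (\<lambda>t. f t + f (prv k t))"
proof (rule eq_matI)
  fix i j assume ij: "i < dim_row (circ k (\<lambda>t. f t + f (prv k t)))" "j < dim_col (circ k (\<lambda>t. f t + f (prv k t)))"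
  then have i: "i < k" and j: "j < k" by auto
  have "((circ k (cc k))\<^sup>T * circ k f) $$ (i,j) =
     (\<Sum>l\<in>{0..<k}. (if l = i \<or> l = nxt k i then 1 else 0) * f (tt k l j))"
    unfolding mult_entry[OF transpose_carrier_mat[THEN iffD2, OF circ_carrier] circ_carrier i j]
    using i j by (intro sum.cong) (auto simp: cc_def tt_def nxt_def split: if_splits)
  also have "\<dots> = f (tt k i j) + f (tt k (nxt k i) j)"
    by (rule sum_two) (use i assms in \<open>auto simp: nxt_def\<close>)
  also have "tt k (nxt k i) j = prv k (tt k i j)"
    using i j assms unfolding tt_def nxt_def prv_def by auto
  finally show "((circ k (cc k))\<^sup>T * circ k f) $$ (i,j) = circ k (\<lambda>t. f t + f (prv k t)) $$ (i,j)"
    using i j by simp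
qed auto

lemma C_mult: assumes "3 \<le> k"
  shows "circ k (cc k) * circ k f = circ k (\<lambda>t. f t + f (nxt k t))"
proof (rule eq_matI)
  fix i j assume ij: "i < dim_row (circ k (\<lambda>t. f t + f (nxt k t)))" "j < dim_col (circ k (\<lambda>t. f t + f (nxt k t)))"
  then have i: "i < k" and j: "j < k" by auto
  have "(circ k (cc k) * circ k f) $$ (i,j) =
     (\<Sum>l\<in>{0..<k}. (if l = i \<or> l = prv k i then 1 else 0) * f (tt k l j))"
    unfolding mult_entry[OF circ_carrier circ_carrier i j]
    using i j by (intro sum.cong) (auto simp: cc_def tt_def prv_def split: if_splits)
  also have "\<dots> = f (tt k i j) + f (tt k (prv k i) j)"
    by (rule sum_two) (use i assms in \<open>auto simp: prv_def\<close>)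
  also have "tt k (prv k i) j = nxt k (tt k i j)"
    using i j assms unfolding tt_def nxt_def prv_def by auto
  finally show "(circ k (cc k) * circ k f) $$ (i,j) = circ k (\<lambda>t. f t + f (nxt k t)) $$ (i,j)"
    using i j by simp
qed auto

theorem mainTheorem4:
  fixes n :: nat
  assumes "n \<ge> 4"
  defines "C \<equiv> circ (n - 1) (\<lambda>i. if i = 0 \<or> i = n - 2 then 1 else (0::real))"
  defines "X \<equiv> 2 \<cdot>\<^sub>m (the (mat_inverse (C * C\<^sup>T + 1\<^sub>m (n - 1))) *
                 (real (n - 1) \<cdot>\<^sub>m 1\<^sub>m (n - 1) - ones_mat (n - 1)))"
  defines "Y \<equiv> ones_mat (n - 1) + C\<^sup>T * X"
  defines "d \<equiv> (\<lambda>j::nat.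
     if j = 0 then
       1/5 + 4 * real (n - 1) / sqrt 5 *
         ((2 ^ (n - 2) + (-3 + sqrt 5) ^ (n - 2)) / (2 ^ (n - 1) - (-3 + sqrt 5) ^ (n - 1))
          - (2 ^ (n - 2) + (-3 - sqrt 5) ^ (n - 2)) / (2 ^ (n - 1) - (-3 - sqrt 5) ^ (n - 1)))
     else
       1/5 + 2 ^ (n + 1 - j) * real (n - 1) / (5 + sqrt 5) *
         (2 * (-3 + sqrt 5) ^ (j - 1) / (2 ^ (n - 1) - (-3 + sqrt 5) ^ (n - 1))
          - (-3 - sqrt 5) ^ j / (2 ^ (n - 1) - (-3 - sqrt 5) ^ (n - 1))))"
  shows "Y = circ (n - 1) d"
proof -
  define m where "m = n - 1"
  have m3: "3 \<le> m" using assms(1) unfolding m_def by simp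
  have n1: "n - 1 = m" unfolding m_def ..
  have n2: "n - 2 = m - 1" unfolding m_def by simp
  have Cc: "C = circ m (cc m)"
  proof -
    have "(\<lambda>i. if i = 0 \<or> i = n - 2 then 1 else (0::real)) = cc m"
      unfolding cc_def n2 by (rule refl)
    then show ?thesis unfolding C_def n1 by simp
  qed
  define A where "A = C * C\<^sup>T + 1\<^sub>m m"
  have Acar: "A \<in> carrier_mat m m" unfolding A_def Cc by simp
  have AM: "A * circ m f = circ m (\<lambda>t. 3*f t + f (prv m t) + f (nxt m t))" for f
  proof -
    have "A * circ m f = C * (C\<^sup>T * circ m f) + circ m f"
      unfolding A_def Cc
      by (subst add_mult_distrib_mat[of _ m m]) (auto intro: mult_carrier_mat
          simp: assoc_mult_mat[OF circ_carrier transpose_carrier_mat[THEN iffD2, OF circ_carrier] circ_carrier])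
    also have "\<dots> = circ m (\<lambda>t. 3*f t + f (prv m t) + f (nxt m t))"
      unfolding Cc CT_mult[OF m3] C_mult[OF m3] circ_add
      by (rule circ_eqI) (use m3 in \<open>auto simp: prv_def nxt_def\<close>)
    finally show ?thesis .
  qed
  have AZ: "A * circ m (zz m) = 1\<^sub>m m"
    unfolding AM one_circ by (rule circ_eqI) (use zz_rec m3 in auto)
  have ZA: "circ m (zz m) * A = 1\<^sub>m m"
    using mat_mult_left_right_inverse[OF Acar circ_carrier AZ] .
  have unit: "A \<in> Units (ring_mat TYPE(real) m ())"
    unfolding Units_def ring_mat_def using Acar AZ ZA by (auto intro!: exI[of _ "circ m (zz m)"])
  have "mat_inverse A \<noteq> None" using mat_inverse(1)[OF Acar, of "()"] unit by blast
  then obtain Ai where Ai: "mat_inverse A = Some Ai" by blast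
  from mat_inverse(2)[OF Acar Ai] have AiA: "Ai * A = 1\<^sub>m m" and Aicar: "Ai \<in> carrier_mat m m" by auto
  define B where "B = real m \<cdot>\<^sub>m 1\<^sub>m m - ones_mat m"
  have Bcar: "B \<in> carrier_mat m m" unfolding B_def ones_circ by (intro minus_carrier_mat) auto
  have AX: "A * circ m (xx m) = 2 \<cdot>\<^sub>m B"
    unfolding AM B_def one_circ ones_circ circ_smult circ_minus
    by (rule circ_eqI) (use xx_rec m3 in auto)
  have X0: "X = circ m (xx m)"
  proof -
    have "X = 2 \<cdot>\<^sub>m (Ai * B)" unfolding X_def Ai A_def[symmetric] B_def n1 by simp
    also have "\<dots> = Ai * (2 \<cdot>\<^sub>m B)" using mult_smult_distrib[OF Aicar Bcar] by simp
    also have "\<dots> = Ai * (A * circ m (xx m))" unfolding AX ..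
    also have "\<dots> = (Ai * A) * circ m (xx m)" using assoc_mult_mat[OF Aicar Acar circ_carrier] by simp
    also have "\<dots> = circ m (xx m)" unfolding AiA by simp
    finally show ?thesis .
  qed
  have "Y = circ m (\<lambda>t. 1 + (xx m t + xx m (prv m t)))"
    unfolding Y_def X0 n1 Cc CT_mult[OF m3] ones_circ circ_add ..
  also have "\<dots> = circ (n - 1) d"
    unfolding n1
  proof (rule circ_eqI)
    fix t assume t: "t < m"
    show "1 + (xx m t + xx m (prv m t)) = d t"
    proof (cases "t = 0")
      case True
      then show ?thesis unfolding d_def n1 n2 using d0_eq[OF m3] by (simp add: prv_def)
    next
      case False
      have n3: "n + 1 - t = m + 2 - t" unfolding m_def using assms(1) by simp
      show ?thesis unfolding d_def n1 n2 n3 using dj_eq[of t m] False t by (simp add: prv_def)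
    qed
  qed
  finally show ?thesis .
qed

end
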